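(* Let $\rho_{AB}$ be a bipartite state on $\mathbb{C}^{d_A}\otimes\mathbb{C}^N$. Let $X^{(1)},\dots,X^{(M)}$ be measurements on Alice's side, where $X^{(i)}$ has outcomes $x^{(i)}_1,\dots,x^{(i)}_N$. Let $Y^{(1)},\dots,Y^{(M)}$ be non-degenerate projective measurements on Bob's side, where $Y^{(i)}$ is given by an orthonormal basis $\{|b^{(i)}_k\rangle\}_{k=1}^N$ of $\mathbb{C}^N$. Assume that $A$ cannot steer $B$ for these measurements. Concretely, assume there exist: - a probability distribution $\{\kappa_\lambda\}$ over a finite set of hidden variables $\lambda$, - probability distributions $p^{(\lambda)}(x^{(i)})=(p^{(\lambda)}_1(x^{(i)}),\dots,p^{(\lambda)}_N(x^{(i)}))$, for each $\lambda$ and each $i$, - density matrices $\rho^{(\lambda)}$ on $\mathbb{C}^N$, such that the assemblage $\sigma_{j|X^{(i)}}=\mathrm{Tr}_A[(E^{(i)}_j\otimes \mathbb{1})\rho_{AB}]$ satisfies $$\sigma_{j|X^{(i)}}=\sum_\lambda \kappa_\lambda\, p^{(\lambda)}_j(x^{(i)})\,\rho^{(\lambda)}\quad\text{for all } i,j.$$ Here $E^{(i)}_j$ is the POVM element of outcome $x^{(i)}_j$. Define $p(x^{(i)}_j)=\mathrm{Tr}\,\sigma_{j|X^{(i)}}$. Define $\vec q(y^{(i)}|x^{(i)}_j)\in\mathbb{R}^N$ to be the conditional distribution of Bob's outcome for $Y^{(i)}$ given Alice's outcome $x^{(i)}_j$, with components $\langle b^{(i)}_k|\sigma_{j|X^{(i)}}|b^{(i)}_k\rangle/p(x^{(i)}_j)$.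 Then $$\bigoplus_{i=1}^{M}\Big[\sum_{j=1}^N \vec q^{\,\downarrow}(y^{(i)}|x^{(i)}_j)\,p(x^{(i)}_j)\Big]\prec \vec s ,$$ where $\vec s\in\mathbb{R}^{MN}$ is the least upper bound (in the majorization order) of the set $\{\bigoplus_{i=1}^M \vec P_\rho(Y^{(i)}) : \rho \text{ a density matrix on }\mathbb{C}^N\}$. Here $\vec P_\rho(Y^{(i)})=(\langle b^{(i)}_k|\rho|b^{(i)}_k\rangle)_{k=1}^N$.
   Context: For $\vec v\in\mathbb{R}^n$, $\vec v^{\,\downarrow}$ denotes $\vec v$ with its components rearranged in non-increasing order. $\oplus$ denotes concatenation (direct sum) of vectors. For $\vec u,\vec w\in\mathbb{R}^n$ with equal component sums, $\vec u\prec\vec w$ (majorization) means $\sum_{k=1}^{m}u^{\downarrow}_k\le \sum_{k=1}^m w^{\downarrow}_k$ for all $m=1,\dots,n$. If the vectors have different lengths, the shorter one is padded with zeros. The least upper bound $\vec s$ is a vector with the following two properties: - every element of the set is majorized by $\vec s$; - $\vec s$ is majorized by every vector that majorizes all elements of the set. Such an $\vec s$ exists in the majorization lattice. *)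

theory Defs
  imports "Jordan_Normal_Form.Matrix"
begin

definition mtrace :: "complex mat \<Rightarrow> complex" where
  "mtrace A = (\<Sum>k<dim_row A. A $$ (k, k))"

definition expect :: "complex vec \<Rightarrow> complex mat \<Rightarrow> complex" where
  "expect v A = (A *\<^sub>v v) \<bullet> conjugate v"

definition psd :: "nat \<Rightarrow> complex mat \<Rightarrow> bool" where
  "psd n A \<longleftrightarrow> A \<in> carrier_mat n n \<and>
     (\<forall>v \<in> carrier_vec n. expect v A \<in> \<real> \<and> 0 \<le> Re (expect v A))"

definition density :: "nat \<Rightarrow> complex mat \<Rightarrow> bool" where
  "density n \<rho> \<longleftrightarrow> psd n \<rho> \<and> mtrace \<rho> = 1"

definition povm :: "nat \<Rightarrow> nat \<Rightarrow> (nat \<Rightarrow> complex mat) \<Rightarrow> bool" where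
  "povm d N E \<longleftrightarrow> (\<forall>j<N. psd d (E j)) \<and>
     (\<forall>a<d. \<forall>a'<d. (\<Sum>j<N. E j $$ (a, a')) = (if a = a' then 1 else 0))"

definition onb :: "nat \<Rightarrow> (nat \<Rightarrow> complex vec) \<Rightarrow> bool" where
  "onb N b \<longleftrightarrow> (\<forall>k<N. b k \<in> carrier_vec N) \<and>
     (\<forall>k<N. \<forall>k'<N. b k \<bullet> conjugate (b k') = (if k = k' then 1 else 0))"

text \<open>Tr_A[(E \<otimes> 1) \<rho>_AB] for \<rho>_AB on C^dA \<otimes> C^N, with the
  Kronecker index convention (a, b) \<mapsto> a * N + b.\<close>
definition cond_state :: "nat \<Rightarrow> nat \<Rightarrow> complex mat \<Rightarrow> complex mat \<Rightarrow> complex mat" where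
  "cond_state dA N \<rho>AB E = mat N N (\<lambda>(r, c).
     \<Sum>a<dA. \<Sum>a'<dA. E $$ (a, a') * \<rho>AB $$ (a' * N + r, a * N + c))"

definition desc :: "real list \<Rightarrow> real list" where
  "desc xs = rev (sort xs)"

definition majorized :: "real list \<Rightarrow> real list \<Rightarrow> bool" (infix \<open>\<prec>\<^sub>m\<close> 50) where
  "u \<prec>\<^sub>m w \<longleftrightarrow> (let n = max (length u) (length w);
       u' = u @ replicate (n - length u) 0;
       w' = w @ replicate (n - length w) 0
     in sum_list u = sum_list w \<and>
        (\<forall>m\<in>{1..n}. sum_list (take m (desc u')) \<le> sum_list (take m (desc w'))))"

definition maj_lub :: "nat \<Rightarrow> real list set \<Rightarrow> real list \<Rightarrow> bool" where
  "maj_lub n S s \<longleftrightarrow> length s = n \<and> (\<forall>x\<in>S. x \<prec>\<^sub>m s) \<and>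
     (\<forall>t. length t = n \<longrightarrow> (\<forall>x\<in>S. x \<prec>\<^sub>m t) \<longrightarrow> s \<prec>\<^sub>m t)"

definition prob_vec :: "nat \<Rightarrow> (nat \<Rightarrow> complex vec) \<Rightarrow> complex mat \<Rightarrow> real list" where
  "prob_vec N b \<rho> = map (\<lambda>k. Re (expect (b k) \<rho>)) [0..<N]"

end

theory Submission
  imports Defs "HOL-Combinatorics.Permutations"
begin


lemma desc_mono: "k \<le> k' \<Longrightarrow> k' < length xs \<Longrightarrow> desc xs ! k' \<le> desc xs ! k"
  unfolding desc_def by (simp add: rev_nth sorted_nth_mono)

lemma length_desc[simp]: "length (desc xs) = length xs"
  unfolding desc_def by simp

lemma mset_desc[simp]: "mset (desc xs) = mset xs"
  unfolding desc_def by simp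

lemma sum_list_desc[simp]: "sum_list (desc xs) = sum_list xs"
  unfolding desc_def by (simp add: sum_mset_sum_list[symmetric])

lemma sorted_subset_le:
  fixes y :: "real list"
  assumes mono: "\<And>k k'. k \<le> k' \<Longrightarrow> k' < length y \<Longrightarrow> y ! k' \<le> y ! k"
    and S: "S \<subseteq> {..<length y}"
  shows "(\<Sum>k\<in>S. y ! k) \<le> sum_list (take (card S) y)"
proof -
  define m where "m = card S"
  have fS: "finite S" using S finite_subset by blast
  have mle: "m \<le> length y" unfolding m_def using S by (metis card_lessThan card_mono finite_lessThan)
  have take: "sum_list (take m y) = (\<Sum>k<m. y ! k)"
    using mle by (simp add: sum_list_sum_nth atLeast0LessThan min_def)
  define A where "A = S - {..<m}"
  define B where "B = {..<m} - S"
  have cA: "card A = card S - card (S \<inter> {..<m})" unfolding A_def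
    by (simp add: card_Diff_subset_Int fS)
  have cB: "card B = m - card (S \<inter> {..<m})" unfolding B_def
    by (metis card_Diff_subset_Int card_lessThan finite_lessThan Int_commute finite_Int)
  have cAB: "card A = card B" using cA cB m_def by simp
  have s1: "(\<Sum>k\<in>S. y ! k) = (\<Sum>k\<in>S \<inter> {..<m}. y ! k) + (\<Sum>k\<in>A. y ! k)"
    unfolding A_def using fS by (metis Diff_eq sum.Int_Diff)
  have s2: "(\<Sum>k<m. y ! k) = (\<Sum>k\<in>S \<inter> {..<m}. y ! k) + (\<Sum>k\<in>B. y ! k)"
    unfolding B_def by (metis Int_commute finite_lessThan sum.Int_Diff)
  have "(\<Sum>k\<in>A. y ! k) \<le> (\<Sum>k\<in>B. y ! k)"
  proof (cases "A = {}")
    case True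
    have "finite B" unfolding B_def by simp
    then have "B = {}" using cAB True card_0_eq by auto
    then show ?thesis using True by simp
  next
    case False
    then obtain a where a: "a \<in> A" by blast
    then have am: "m \<le> a" "a < length y" using S unfolding A_def by auto
    define c where "c = y ! m"
    have "(\<Sum>k\<in>A. y ! k) \<le> of_nat (card A) * c"
    proof (rule sum_bounded_above)
      fix k assume "k \<in> A"
      then have "m \<le> k" "k < length y" using S unfolding A_def by auto
      then show "y ! k \<le> c" unfolding c_def by (rule mono)
    qed
    also have "\<dots> = of_nat (card B) * c" using cAB by simp
    also have "\<dots> \<le> (\<Sum>k\<in>B. y ! k)"
    proof (rule sum_bounded_below)
      fix k assume "k \<in> B"
      then have "k \<le> m" "m < length y" using am unfolding B_def by auto
      then show "c \<le> y ! k" unfolding c_def by (rule mono)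
    qed
    finally show ?thesis .
  qed
  then show ?thesis using s1 s2 take m_def by simp
qed

lemma desc_perm:
  obtains p where "p permutes {..<length x}" "\<And>i. i < length x \<Longrightarrow> desc x ! i = x ! p i"
proof -
  obtain p where p: "p permutes {..<length x}" "permute_list p x = desc x"
    using mset_eq_permutation[of "desc x" x] by auto
  show ?thesis using that[OF p(1)] p by (metis permute_list_nth)
qed

lemma subset_le_top:
  fixes x :: "real list"
  assumes S: "S \<subseteq> {..<length x}"
  shows "(\<Sum>k\<in>S. x ! k) \<le> sum_list (take (card S) (desc x))"
proof -
  obtain p where p: "p permutes {..<length x}" "\<And>i. i < length x \<Longrightarrow> desc x ! i = x ! p i"
    using desc_perm[of x] by blast
  define S' where "S' = {i. i < length x \<and> p i \<in> S}"
  have bij: "bij_betw p {..<length x} {..<length x}" using p(1) by (rule permutes_imp_bij)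
  have img: "p ` S' = S" unfolding S'_def using bij S
    by (auto simp: bij_betw_def)
  have inj: "inj_on p S'" using bij unfolding S'_def bij_betw_def by (auto intro: inj_on_subset)
  have "(\<Sum>k\<in>S. x ! k) = (\<Sum>i\<in>S'. x ! p i)" using img inj sum.reindex[of p S' "\<lambda>k. x ! k"] by simp
  also have "\<dots> = (\<Sum>i\<in>S'. desc x ! i)" using p(2) unfolding S'_def by simp
  also have "\<dots> \<le> sum_list (take (card S') (desc x))"
    by (rule sorted_subset_le) (auto simp: desc_mono S'_def)
  also have "card S' = card S" using img inj card_image by metis
  finally show ?thesis .
qed

lemma top_attained:
  fixes x :: "real list"
  assumes m: "m \<le> length x"
  obtains S where "S \<subseteq> {..<length x}" "card S = m" "sum_list (take m (desc x)) = (\<Sum>k\<in>S. x ! k)"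
proof -
  obtain p where p: "p permutes {..<length x}" "\<And>i. i < length x \<Longrightarrow> desc x ! i = x ! p i"
    using desc_perm[of x] by blast
  have bij: "bij_betw p {..<length x} {..<length x}" using p(1) by (rule permutes_imp_bij)
  have inj: "inj_on p {..<m}" using bij m unfolding bij_betw_def
    by (meson inj_on_subset lessThan_subset_iff)
  have sub: "p ` {..<m} \<subseteq> {..<length x}" using bij m unfolding bij_betw_def by auto
  have "sum_list (take m (desc x)) = (\<Sum>i<m. desc x ! i)"
    using m by (simp add: sum_list_sum_nth atLeast0LessThan min_def)
  also have "\<dots> = (\<Sum>i<m. x ! p i)" using p(2) m by simp
  also have "\<dots> = (\<Sum>k\<in>p ` {..<m}. x ! k)" using sum.reindex[OF inj, of "\<lambda>k. x ! k"] by simp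
  finally show ?thesis using that[OF sub] card_image[OF inj] by simp
qed



abbreviation cm :: "nat \<Rightarrow> nat \<Rightarrow> (nat \<Rightarrow> nat \<Rightarrow> 'a) \<Rightarrow> 'a list" where
  "cm M N F \<equiv> concat (map (\<lambda>i. map (F i) [0..<N]) [0..<M])"

lemma cm_length[simp]: "length (cm M N F) = M * N"
  by (induction M) auto

lemma idx_less: "i < M \<Longrightarrow> k < (N::nat) \<Longrightarrow> i * N + k < M * N"
proof -
  assume a: "i < M" "k < N"
  have "i * N + k < i * N + N" using a by simp
  also have "\<dots> = Suc i * N" by simp
  also have "\<dots> \<le> M * N" using a by (intro mult_right_mono) auto
  finally show ?thesis .
qed

lemma cm_nth: "i < M \<Longrightarrow> k < N \<Longrightarrow> cm M N F ! (i * N + k) = F i k"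
proof (induction M)
  case 0 then show ?case by simp
next
  case (Suc M)
  show ?case
  proof (cases "i < M")
    case True
    then show ?thesis using Suc idx_less[OF True Suc.prems(2)] by (simp add: nth_append)
  next
    case False
    then have "i = M" using Suc by simp
    then show ?thesis using Suc by (simp add: nth_append)
  qed
qed

definition gidx :: "nat \<Rightarrow> nat \<times> nat \<Rightarrow> nat" where
  "gidx N = (\<lambda>(i, k). i * N + k)"

lemma gidx_inj: "inj_on (gidx N) (SIGMA i:A. T i)" if "\<forall>i\<in>A. T i \<subseteq> {..<N}"
proof (rule inj_onI)
  fix x y assume x: "x \<in> (SIGMA i:A. T i)" and y: "y \<in> (SIGMA i:A. T i)" and e: "gidx N x = gidx N y"
  obtain i k where xi: "x = (i, k)" "i \<in> A" "k \<in> T i" using x by auto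
  obtain i' k' where yi: "y = (i', k')" "i' \<in> A" "k' \<in> T i'" using y by auto
  have kN: "k < N" "k' < N" using that xi yi by auto
  have e': "i * N + k = i' * N + k'" using e xi yi by (simp add: gidx_def)
  have "i = i'" using e' kN
    by (metis add.commute div_mult_self1 less_nat_zero_code div_less add_0 not_gr0 mult_not_zero)
  then show "x = y" using e' xi yi by simp
qed

lemma cm_sum:
  assumes T: "\<forall>i<M. T i \<subseteq> {..<N}"
  shows "(\<Sum>x\<in>gidx N ` (SIGMA i:{..<M}. T i). cm M N F ! x) = (\<Sum>i<M. \<Sum>k\<in>T i. F i k)"
    and "card (gidx N ` (SIGMA i:{..<M}. T i)) = (\<Sum>i<M. card (T i))"
    and "gidx N ` (SIGMA i:{..<M}. T i) \<subseteq> {..<M * N}"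
proof -
  have inj: "inj_on (gidx N) (SIGMA i:{..<M}. T i)" using T by (intro gidx_inj) auto
  have fin: "finite (T i)" if "i < M" for i using T that finite_subset by blast
  have "(\<Sum>x\<in>gidx N ` (SIGMA i:{..<M}. T i). cm M N F ! x) = (\<Sum>p\<in>(SIGMA i:{..<M}. T i). cm M N F ! gidx N p)"
    by (rule sum.reindex[OF inj, unfolded comp_def])
  also have "\<dots> = (\<Sum>p\<in>(SIGMA i:{..<M}. T i). F (fst p) (snd p))"
  proof (rule sum.cong)
    fix p assume p: "p \<in> (SIGMA i:{..<M}. T i)"
    then obtain i k where "p = (i, k)" "i < M" "k \<in> T i" by auto
    moreover then have "k < N" using T by auto
    ultimately show "cm M N F ! gidx N p = F (fst p) (snd p)" by (simp add: gidx_def cm_nth)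
  qed simp
  also have "\<dots> = (\<Sum>i<M. \<Sum>k\<in>T i. F i k)"
    using fin by (subst sum.Sigma) (auto simp: split_beta)
  finally show "(\<Sum>x\<in>gidx N ` (SIGMA i:{..<M}. T i). cm M N F ! x) = (\<Sum>i<M. \<Sum>k\<in>T i. F i k)" .
  have "card (gidx N ` (SIGMA i:{..<M}. T i)) = card (SIGMA i:{..<M}. T i)" using inj by (rule card_image)
  also have "\<dots> = (\<Sum>i<M. card (T i))" using fin by (subst card_SigmaI) auto
  finally show "card (gidx N ` (SIGMA i:{..<M}. T i)) = (\<Sum>i<M. card (T i))" .
  show "gidx N ` (SIGMA i:{..<M}. T i) \<subseteq> {..<M * N}"
    using T by (auto simp: gidx_def intro!: idx_less)
qed

lemma decomp:
  assumes "S \<subseteq> {..<M * N}"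
  shows "S = gidx N ` (SIGMA i:{..<M}. {k. k < N \<and> i * N + k \<in> S})"
proof
  show "S \<subseteq> gidx N ` (SIGMA i:{..<M}. {k. k < N \<and> i * N + k \<in> S})"
  proof
    fix x assume x: "x \<in> S"
    then have xl: "x < M * N" using assms by auto
    then have N: "N > 0" by (metis mult_0_right not_gr0 not_less_zero)
    have d: "x div N < M" using xl by (simp add: less_mult_imp_div_less)
    have m: "x mod N < N" using N by simp
    have "x = x div N * N + x mod N" by simp
    then show "x \<in> gidx N ` (SIGMA i:{..<M}. {k. k < N \<and> i * N + k \<in> S})"
      using d m x unfolding gidx_def by (intro image_eqI[of _ _ "(x div N, x mod N)"]) auto
  qed
qed (auto simp: gidx_def)

lemma expect_carrier:
  assumes "A \<in> carrier_mat N N" "v \<in> carrier_vec N"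
  shows "expect v A = (\<Sum>r<N. \<Sum>c<N. A $$ (r, c) * v $ c * cnj (v $ r))"
  using assms unfolding expect_def
  by (simp add: mult_mat_vec_def scalar_prod_def row_def sum_distrib_right atLeast0LessThan mult.assoc)

lemma desc_scale:
  fixes t :: real assumes "t > 0"
  shows "desc (map (\<lambda>y. y / t) xs) = map (\<lambda>y. y / t) (desc xs)"
proof -
  have "sort (map (\<lambda>y. y / t) xs) = map (\<lambda>y. y / t) (sort xs)"
  proof (rule properties_for_sort)
    show "mset (map (\<lambda>y. y / t) (sort xs)) = mset (map (\<lambda>y. y / t) xs)" by simp
    show "sorted (map (\<lambda>y. y / t) (sort xs))"
      unfolding sorted_map
      by (rule sorted_wrt_mono_rel[OF _ sorted_sort]) (use assms in \<open>simp add: divide_right_mono\<close>)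
  qed
  then show ?thesis unfolding desc_def by (simp add: rev_map)
qed

lemma set_desc[simp]: "set (desc xs) = set xs"
  by (metis mset_desc set_mset_mset)

lemma cm_sum_all: "sum_list (cm M N F) = (\<Sum>i<M. \<Sum>k<N. F i k)"
  by (induction M) (auto simp: interv_sum_list_conv_sum_set_nat atLeast0LessThan)

lemma sum_desc_nth: "length x = N \<Longrightarrow> (\<Sum>k<N. desc x ! k) = (\<Sum>k<N. x ! k)"
  by (metis length_desc sum_list_desc sum_list_sum_nth atLeast0LessThan)



lemma swap3: "(\<Sum>j\<in>A. \<Sum>k\<in>B. \<Sum>l\<in>C. f j k l) = (\<Sum>l\<in>C. \<Sum>k\<in>B. \<Sum>j\<in>A. f j k l)"
proof -
  have "(\<Sum>j\<in>A. \<Sum>k\<in>B. \<Sum>l\<in>C. f j k l) = (\<Sum>j\<in>A. \<Sum>l\<in>C. \<Sum>k\<in>B. f j k l)"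
    by (rule sum.cong[OF refl], rule sum.swap)
  also have "\<dots> = (\<Sum>l\<in>C. \<Sum>j\<in>A. \<Sum>k\<in>B. f j k l)" by (rule sum.swap)
  also have "\<dots> = (\<Sum>l\<in>C. \<Sum>k\<in>B. \<Sum>j\<in>A. f j k l)" by (rule sum.cong[OF refl], rule sum.swap)
  finally show ?thesis .
qed

theorem theorem1:
  fixes dA N M :: nat
    and \<rho>AB :: "complex mat"
    and E :: "nat \<Rightarrow> nat \<Rightarrow> complex mat"
    and b :: "nat \<Rightarrow> nat \<Rightarrow> complex vec"
    and \<Lambda> :: "'l set"
    and \<kappa> :: "'l \<Rightarrow> real"
    and pl :: "'l \<Rightarrow> nat \<Rightarrow> nat \<Rightarrow> real"
    and \<rho>l :: "'l \<Rightarrow> complex mat"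
    and s :: "real list"
  assumes state: "density (dA * N) \<rho>AB"
    and meas_A: "\<forall>i<M. povm dA N (E i)"
    and meas_B: "\<forall>i<M. onb N (b i)"
    and fin: "finite \<Lambda>"
    and kappa_nonneg: "\<forall>l\<in>\<Lambda>. 0 \<le> \<kappa> l"
    and kappa_sum: "(\<Sum>l\<in>\<Lambda>. \<kappa> l) = 1"
    and p_nonneg: "\<forall>l\<in>\<Lambda>. \<forall>i<M. \<forall>j<N. 0 \<le> pl l i j"
    and p_sum: "\<forall>l\<in>\<Lambda>. \<forall>i<M. (\<Sum>j<N. pl l i j) = 1"
    and rho_lambda: "\<forall>l\<in>\<Lambda>. density N (\<rho>l l)"
    and LHS: "\<forall>i<M. \<forall>j<N. cond_state dA N \<rho>AB (E i j) =
               mat N N (\<lambda>(r, c). \<Sum>l\<in>\<Lambda>. complex_of_real (\<kappa> l * pl l i j) * \<rho>l l $$ (r, c))"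
    and lub: "maj_lub (M * N)
               {concat (map (\<lambda>i. prob_vec N (b i) \<rho>) [0..<M]) | \<rho>. density N \<rho>} s"
  shows "concat (map (\<lambda>i. map (\<lambda>k.
            \<Sum>j<N. desc (map (\<lambda>k'. Re (expect (b i k') (cond_state dA N \<rho>AB (E i j)))
                                    / Re (mtrace (cond_state dA N \<rho>AB (E i j)))) [0..<N]) ! k
                  * Re (mtrace (cond_state dA N \<rho>AB (E i j))))
            [0..<N]) [0..<M]) \<prec>\<^sub>m s"
proof -
  define \<sigma> where "\<sigma> i j = cond_state dA N \<rho>AB (E i j)" for i j
  define a where "a l i j = \<kappa> l * pl l i j" for l i j
  define P where "P l i k = Re (expect (b i k) (\<rho>l l))" for l i k
  define D where "D i j k = Re (expect (b i k) (\<sigma> i j))" for i j k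
  define t where "t i j = Re (mtrace (\<sigma> i j))" for i j
  define dl where "dl i j = map (D i j) [0..<N]" for i j
  define G where "G i k = (\<Sum>j<N. desc (dl i j) ! k)" for i k
  define v where "v l = cm M N (P l)" for l
  have carr: "\<rho>l l \<in> carrier_mat N N" if "l \<in> \<Lambda>" for l
    using rho_lambda that by (auto simp: density_def psd_def)
  have tr1: "(\<Sum>k<N. \<rho>l l $$ (k, k)) = 1" if "l \<in> \<Lambda>" for l
    using rho_lambda carr[OF that] that by (auto simp: density_def mtrace_def)
  have bc: "b i k \<in> carrier_vec N" if "i < M" "k < N" for i k
    using meas_B that by (auto simp: onb_def)
  have a_nn: "0 \<le> a l i j" if "l \<in> \<Lambda>" "i < M" "j < N" for l i j
    using kappa_nonneg p_nonneg that by (simp add: a_def)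
  have asum: "(\<Sum>j<N. a l i j) = \<kappa> l" if "l \<in> \<Lambda>" "i < M" for l i
    using p_sum that by (simp add: a_def sum_distrib_left[symmetric])
  have \<sigma>eq: "\<sigma> i j = mat N N (\<lambda>(r, c). \<Sum>l\<in>\<Lambda>. complex_of_real (a l i j) * \<rho>l l $$ (r, c))"
    if "i < M" "j < N" for i j
    using LHS that by (simp add: \<sigma>_def a_def)
  have F1: "D i j k = (\<Sum>l\<in>\<Lambda>. a l i j * P l i k)" if ijk: "i < M" "j < N" "k < N" for i j k
  proof -
    let ?v = "b i k"
    have "expect ?v (\<sigma> i j) = (\<Sum>r<N. \<Sum>c<N. (\<Sum>l\<in>\<Lambda>. complex_of_real (a l i j) * \<rho>l l $$ (r, c)) * ?v $ c * cnj (?v $ r))"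
      by (subst expect_carrier[OF _ bc[OF ijk(1,3)]]) (auto simp: \<sigma>eq[OF ijk(1,2)])
    also have "\<dots> = (\<Sum>r<N. \<Sum>c<N. \<Sum>l\<in>\<Lambda>. complex_of_real (a l i j) * (\<rho>l l $$ (r, c) * ?v $ c * cnj (?v $ r)))"
      by (simp add: sum_distrib_right mult.assoc)
    also have "\<dots> = (\<Sum>r<N. \<Sum>l\<in>\<Lambda>. \<Sum>c<N. complex_of_real (a l i j) * (\<rho>l l $$ (r, c) * ?v $ c * cnj (?v $ r)))"
      by (rule sum.cong[OF refl], rule sum.swap)
    also have "\<dots> = (\<Sum>l\<in>\<Lambda>. \<Sum>r<N. \<Sum>c<N. complex_of_real (a l i j) * (\<rho>l l $$ (r, c) * ?v $ c * cnj (?v $ r)))"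
      by (rule sum.swap)
    also have "\<dots> = (\<Sum>l\<in>\<Lambda>. complex_of_real (a l i j) * expect ?v (\<rho>l l))"
      by (rule sum.cong[OF refl]) (simp add: expect_carrier[OF carr bc[OF ijk(1,3)]] sum_distrib_left)
    finally have "expect ?v (\<sigma> i j) = (\<Sum>l\<in>\<Lambda>. complex_of_real (a l i j) * expect ?v (\<rho>l l))" .
    then show ?thesis unfolding D_def P_def by (simp add: Re_sum)
  qed
  have F2: "t i j = (\<Sum>l\<in>\<Lambda>. a l i j)" if ij: "i < M" "j < N" for i j
  proof -
    have "mtrace (\<sigma> i j) = (\<Sum>k<N. \<Sum>l\<in>\<Lambda>. complex_of_real (a l i j) * \<rho>l l $$ (k, k))"
      by (simp add: \<sigma>eq[OF ij] mtrace_def)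
    also have "\<dots> = (\<Sum>l\<in>\<Lambda>. complex_of_real (a l i j) * (\<Sum>k<N. \<rho>l l $$ (k, k)))"
      by (subst sum.swap) (simp add: sum_distrib_left)
    also have "\<dots> = (\<Sum>l\<in>\<Lambda>. complex_of_real (a l i j))"
      by (rule sum.cong[OF refl]) (simp add: tr1)
    finally show ?thesis unfolding t_def by (simp add: Re_sum)
  qed
  have F4: "D i j k = 0" if ijk: "i < M" "j < N" "k < N" and t0: "t i j = 0" for i j k
  proof -
    have "\<forall>l\<in>\<Lambda>. a l i j = 0"
      using t0 F2[OF ijk(1,2)] sum_nonneg_eq_0_iff[OF fin, of "\<lambda>l. a l i j"] a_nn ijk by auto
    then show ?thesis using F1[OF ijk] by simp
  qed
  have F5: "desc (map (\<lambda>k'. D i j k' / t i j) [0..<N]) ! k * t i j = desc (dl i j) ! k"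
    if ijk: "i < M" "j < N" "k < N" for i j k
  proof (cases "t i j = 0")
    case True
    have "dl i j = map (\<lambda>_. 0) [0..<N]" unfolding dl_def using F4[OF ijk(1,2) _ True] by simp
    then have "set (desc (dl i j)) \<subseteq> {0}" by auto
    moreover have "k < length (desc (dl i j))" using ijk by (simp add: dl_def)
    ultimately have "desc (dl i j) ! k = 0" using nth_mem by blast
    then show ?thesis using True by simp
  next
    case False
    have "t i j \<ge> 0" using F2[OF ijk(1,2)] a_nn ijk by (simp add: sum_nonneg)
    then have tp: "t i j > 0" using False by simp
    have e: "map (\<lambda>k'. D i j k' / t i j) [0..<N] = map (\<lambda>y. y / t i j) (dl i j)" by (simp add: dl_def)
    have len: "k < length (desc (dl i j))" using ijk by (simp add: dl_def)
    have "desc (map (\<lambda>k'. D i j k' / t i j) [0..<N]) ! k = desc (dl i j) ! k / t i j"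
      unfolding e desc_scale[OF tp] using len by (simp del: length_desc)
    then show ?thesis using tp by simp
  qed
  have goal_eq: "concat (map (\<lambda>i. map (\<lambda>k.
            \<Sum>j<N. desc (map (\<lambda>k'. Re (expect (b i k') (cond_state dA N \<rho>AB (E i j)))
                                    / Re (mtrace (cond_state dA N \<rho>AB (E i j)))) [0..<N]) ! k
                  * Re (mtrace (cond_state dA N \<rho>AB (E i j))))
            [0..<N]) [0..<M]) = cm M N G"
    unfolding G_def
    apply (rule arg_cong[where f=concat])
    apply (rule map_cong[OF refl])
    apply (rule map_cong[OF refl])
    apply (rule sum.cong[OF refl])
    using F5 unfolding D_def t_def \<sigma>_def by simp
  have vmaj: "sum_list (v l) = sum_list s \<and> (\<forall>m\<in>{1..M*N}. sum_list (take m (desc (v l))) \<le> sum_list (take m (desc s)))"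
    if l: "l \<in> \<Lambda>" for l
  proof -
    have "v l \<in> {concat (map (\<lambda>i. prob_vec N (b i) \<rho>) [0..<M]) | \<rho>. density N \<rho>}"
      using rho_lambda l unfolding v_def P_def prob_vec_def by blast
    then have "v l \<prec>\<^sub>m s" using lub unfolding maj_lub_def by blast
    moreover have "length s = M * N" using lub unfolding maj_lub_def by simp
    ultimately show ?thesis unfolding majorized_def Let_def by (simp add: v_def)
  qed
  have lens: "length s = M * N" using lub unfolding maj_lub_def by simp
  have E: "sum_list (cm M N G) = sum_list s"
  proof -
    have "sum_list (cm M N G) = (\<Sum>i<M. \<Sum>k<N. G i k)" by (rule cm_sum_all)
    also have "\<dots> = (\<Sum>i<M. \<Sum>j<N. \<Sum>k<N. desc (dl i j) ! k)"
      unfolding G_def by (rule sum.cong[OF refl], rule sum.swap)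
    also have "\<dots> = (\<Sum>i<M. \<Sum>j<N. \<Sum>k<N. D i j k)"
      by (rule sum.cong[OF refl], rule sum.cong[OF refl]) (simp add: sum_desc_nth dl_def)
    also have "\<dots> = (\<Sum>i<M. \<Sum>j<N. \<Sum>k<N. \<Sum>l\<in>\<Lambda>. a l i j * P l i k)"
      by (intro sum.cong refl) (simp add: F1)
    also have "\<dots> = (\<Sum>l\<in>\<Lambda>. \<kappa> l * (\<Sum>i<M. \<Sum>k<N. P l i k))"
    proof -
      have "(\<Sum>i<M. \<Sum>j<N. \<Sum>k<N. \<Sum>l\<in>\<Lambda>. a l i j * P l i k) = (\<Sum>i<M. \<Sum>l\<in>\<Lambda>. \<Sum>k<N. \<Sum>j<N. a l i j * P l i k)"
        by (rule sum.cong[OF refl], rule swap3)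
      also have "\<dots> = (\<Sum>i<M. \<Sum>l\<in>\<Lambda>. \<Sum>k<N. \<kappa> l * P l i k)"
        by (auto intro!: sum.cong simp: sum_distrib_right[symmetric] asum)
      also have "\<dots> = (\<Sum>l\<in>\<Lambda>. \<kappa> l * (\<Sum>i<M. \<Sum>k<N. P l i k))"
        by (subst sum.swap) (simp add: sum_distrib_left)
      finally show ?thesis .
    qed
    also have "\<dots> = (\<Sum>l\<in>\<Lambda>. \<kappa> l * sum_list s)"
      using vmaj by (auto intro!: sum.cong simp: v_def cm_sum_all[symmetric])
    also have "\<dots> = sum_list s" using kappa_sum by (simp add: sum_distrib_right[symmetric])
    finally show ?thesis .
  qed
  have T: "sum_list (take m (desc (cm M N G))) \<le> sum_list (take m (desc s))"
    if m: "m \<in> {1..M*N}" for m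
  proof -
    define n where "n = M * N"
    have mn: "m \<le> length (cm M N G)" using m by simp
    obtain S where S: "S \<subseteq> {..<length (cm M N G)}" "card S = m"
      "sum_list (take m (desc (cm M N G))) = (\<Sum>x\<in>S. cm M N G ! x)"
      using top_attained[OF mn] by blast
    define Sl where "Sl i = {k. k < N \<and> i * N + k \<in> S}" for i
    have Slsub: "\<forall>i<M. Sl i \<subseteq> {..<N}" unfolding Sl_def by auto
    have Seq: "S = gidx N ` (SIGMA i:{..<M}. Sl i)" unfolding Sl_def using S(1) by (intro decomp) simp
    have cardS: "(\<Sum>i<M. card (Sl i)) = m" using cm_sum(2)[OF Slsub] Seq S(2) by simp
    have cSl: "card (Sl i) \<le> N" if "i < M" for i
      using Slsub that by (metis card_lessThan card_mono finite_lessThan)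
    define tp where "tp l i = sum_list (take (card (Sl i)) (desc (map (P l i) [0..<N])))" for l i
    have inner: "sum_list (take (card (Sl i)) (desc (dl i j))) \<le> (\<Sum>l\<in>\<Lambda>. a l i j * tp l i)"
      if ij: "i < M" "j < N" for i j
    proof -
      have cl: "card (Sl i) \<le> length (dl i j)" using cSl[OF ij(1)] by (simp add: dl_def)
      obtain T where T: "T \<subseteq> {..<length (dl i j)}" "card T = card (Sl i)"
        "sum_list (take (card (Sl i)) (desc (dl i j))) = (\<Sum>k\<in>T. dl i j ! k)"
        using top_attained[OF cl] by blast
      have TN: "T \<subseteq> {..<N}" using T(1) by (simp add: dl_def)
      have "(\<Sum>k\<in>T. dl i j ! k) = (\<Sum>k\<in>T. \<Sum>l\<in>\<Lambda>. a l i j * P l i k)"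
        using TN F1[OF ij] by (auto intro!: sum.cong simp: dl_def)
      also have "\<dots> = (\<Sum>l\<in>\<Lambda>. a l i j * (\<Sum>k\<in>T. map (P l i) [0..<N] ! k))"
        using TN by (subst sum.swap) (auto intro!: sum.cong simp: sum_distrib_left)
      also have "\<dots> \<le> (\<Sum>l\<in>\<Lambda>. a l i j * tp l i)"
      proof (rule sum_mono)
        fix l assume l: "l \<in> \<Lambda>"
        have "(\<Sum>k\<in>T. map (P l i) [0..<N] ! k) \<le> tp l i"
          using subset_le_top[of T "map (P l i) [0..<N]"] TN T(2) unfolding tp_def by simp
        then show "a l i j * (\<Sum>k\<in>T. map (P l i) [0..<N] ! k) \<le> a l i j * tp l i"
          using a_nn[OF l ij] by (rule mult_left_mono)
      qed
      finally show ?thesis using T(3) by simp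
    qed
    have perl: "(\<Sum>i<M. tp l i) \<le> sum_list (take m (desc s))" if l: "l \<in> \<Lambda>" for l
    proof -
      have "\<forall>i\<in>{..<M}. \<exists>T. T \<subseteq> {..<N} \<and> card T = card (Sl i) \<and> tp l i = (\<Sum>k\<in>T. P l i k)"
      proof
        fix i assume "i \<in> {..<M}"
        then have cl: "card (Sl i) \<le> length (map (P l i) [0..<N])" using cSl by simp
        obtain T where T: "T \<subseteq> {..<length (map (P l i) [0..<N])}" "card T = card (Sl i)"
          "tp l i = (\<Sum>k\<in>T. map (P l i) [0..<N] ! k)"
          using top_attained[OF cl] unfolding tp_def by blast
        then show "\<exists>T. T \<subseteq> {..<N} \<and> card T = card (Sl i) \<and> tp l i = (\<Sum>k\<in>T. P l i k)"
          by (intro exI[of _ T]) (auto intro!: sum.cong)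
      qed
      then obtain Tf where Tf: "\<forall>i\<in>{..<M}. Tf i \<subseteq> {..<N} \<and> card (Tf i) = card (Sl i) \<and> tp l i = (\<Sum>k\<in>Tf i. P l i k)"
        by metis
      have Tfs: "\<forall>i<M. Tf i \<subseteq> {..<N}" using Tf by auto
      have "(\<Sum>i<M. tp l i) = (\<Sum>i<M. \<Sum>k\<in>Tf i. P l i k)" using Tf by simp
      also have "\<dots> = (\<Sum>x\<in>gidx N ` (SIGMA i:{..<M}. Tf i). v l ! x)"
        unfolding v_def by (rule cm_sum(1)[OF Tfs, symmetric])
      also have "\<dots> \<le> sum_list (take (card (gidx N ` (SIGMA i:{..<M}. Tf i))) (desc (v l)))"
        by (rule subset_le_top) (use cm_sum(3)[OF Tfs] in \<open>simp add: v_def\<close>)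
      also have "card (gidx N ` (SIGMA i:{..<M}. Tf i)) = m"
        using cm_sum(2)[OF Tfs] Tf cardS by simp
      also have "sum_list (take m (desc (v l))) \<le> sum_list (take m (desc s))"
        using vmaj[OF l] m by blast
      finally show ?thesis .
    qed
    have "sum_list (take m (desc (cm M N G))) = (\<Sum>i<M. \<Sum>k\<in>Sl i. G i k)"
      using S(3) cm_sum(1)[OF Slsub] Seq by simp
    also have "\<dots> = (\<Sum>i<M. \<Sum>j<N. \<Sum>k\<in>Sl i. desc (dl i j) ! k)"
      unfolding G_def by (rule sum.cong[OF refl], rule sum.swap)
    also have "\<dots> \<le> (\<Sum>i<M. \<Sum>j<N. sum_list (take (card (Sl i)) (desc (dl i j))))"
    proof (intro sum_mono)
      fix i j assume "i \<in> {..<M}" "j \<in> {..<N}"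
      then show "(\<Sum>k\<in>Sl i. desc (dl i j) ! k) \<le> sum_list (take (card (Sl i)) (desc (dl i j)))"
        using Slsub by (intro sorted_subset_le) (auto simp: desc_mono dl_def)
    qed
    also have "\<dots> \<le> (\<Sum>i<M. \<Sum>j<N. \<Sum>l\<in>\<Lambda>. a l i j * tp l i)"
      by (intro sum_mono inner) auto
    also have "\<dots> = (\<Sum>l\<in>\<Lambda>. \<kappa> l * (\<Sum>i<M. tp l i))"
    proof -
      have "(\<Sum>i<M. \<Sum>j<N. \<Sum>l\<in>\<Lambda>. a l i j * tp l i) = (\<Sum>i<M. \<Sum>l\<in>\<Lambda>. \<Sum>j<N. a l i j * tp l i)"
        by (rule sum.cong[OF refl], rule sum.swap)
      also have "\<dots> = (\<Sum>i<M. \<Sum>l\<in>\<Lambda>. \<kappa> l * tp l i)"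
        by (auto intro!: sum.cong simp: sum_distrib_right[symmetric] asum)
      also have "\<dots> = (\<Sum>l\<in>\<Lambda>. \<kappa> l * (\<Sum>i<M. tp l i))"
        by (subst sum.swap) (simp add: sum_distrib_left)
      finally show ?thesis .
    qed
    also have "\<dots> \<le> (\<Sum>l\<in>\<Lambda>. \<kappa> l * sum_list (take m (desc s)))"
      using perl kappa_nonneg by (intro sum_mono mult_left_mono) auto
    also have "\<dots> = sum_list (take m (desc s))" using kappa_sum by (simp add: sum_distrib_right[symmetric])
    finally show ?thesis .
  qed
  show ?thesis unfolding goal_eq majorized_def Let_def using E T lens by simp
qed

end
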